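(* Let $\mu_1\in(0,1)$ and $0<\varepsilon_2\le\frac12\mu_1$. Let $h(\mu_1,\varepsilon_2)=\ln\frac{(1-\mu_1+\varepsilon_2)\mu_1}{(1-\mu_1)(\mu_1-\varepsilon_2)}$ and $H=\frac{1}{(\mu_1-\varepsilon_2)(1-\mu_1+\varepsilon_2)h(\mu_1,\varepsilon_2)^2}$. Then \[ H\le\frac{2\dot\mu_1}{\varepsilon_2^2}+\frac{2}{\varepsilon_2},\qquad\text{where }\dot\mu_1=\mu_1(1-\mu_1). \] *)

theory Defs
  imports Complex_Main
begin

definition hfun :: "real \<Rightarrow> real \<Rightarrow> real" where
  "hfun \<mu>1 \<epsilon>2 = ln (((1 - \<mu>1 + \<epsilon>2) * \<mu>1) / ((1 - \<mu>1) * (\<mu>1 - \<epsilon>2)))"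

definition Hfun :: "real \<Rightarrow> real \<Rightarrow> real" where
  "Hfun \<mu>1 \<epsilon>2 = 1 / ((\<mu>1 - \<epsilon>2) * (1 - \<mu>1 + \<epsilon>2) * (hfun \<mu>1 \<epsilon>2)^2)"

end

theory Submission
  imports Defs
begin

lemma ln_ge: "0 < (y::real) \<Longrightarrow> 1 - 1/y \<le> ln y"
  using ln_le_minus_one[of "1/y"] by (simp add: ln_div)

theorem lemma15:
  fixes \<mu>1 \<epsilon>2 :: real
  assumes "0 < \<mu>1" and "\<mu>1 < 1"
    and "0 < \<epsilon>2" and "\<epsilon>2 \<le> \<mu>1 / 2"
  shows "Hfun \<mu>1 \<epsilon>2 \<le> 2 * (\<mu>1 * (1 - \<mu>1)) / \<epsilon>2^2 + 2 / \<epsilon>2"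
proof -
  define m where "m = \<mu>1"
  define e where "e = \<epsilon>2"
  define p where "p = m - e"
  define q where "q = 1 - m + e"
  have m0: "0 < m" "m < 1" "0 < e" "e \<le> m/2" using assms by (auto simp: m_def e_def)
  have p0: "p \<ge> m/2" "p > 0" using m0 by (auto simp: p_def)
  have q0: "q > 0" "q > 1 - m" using m0 by (auto simp: q_def)
  have h: "hfun \<mu>1 \<epsilon>2 = ln (m/p) + ln (q/(1-m))"
    unfolding hfun_def m_def[symmetric] e_def[symmetric] p_def[symmetric] q_def[symmetric]
    using m0 p0 q0 by (simp add: ln_div ln_mult)
  have l1: "ln (m/p) \<ge> e/m" using ln_ge[of "m/p"] m0 p0 by (simp add: p_def field_simps)
  have l2: "ln (q/(1-m)) \<ge> e/q" using ln_ge[of "q/(1-m)"] m0 q0 by (simp add: q_def field_simps)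
  define k where "k = e/m + e/q"
  have k0: "k > 0" using m0 q0 unfolding k_def by (intro add_pos_pos divide_pos_pos) auto
  have hk: "hfun \<mu>1 \<epsilon>2 \<ge> k" using h l1 l2 k_def by simp
  have "(hfun \<mu>1 \<epsilon>2)^2 \<ge> k^2" using hk k0 by (simp add: power_mono)
  hence "Hfun \<mu>1 \<epsilon>2 \<le> 1 / (p * q * k^2)"
    unfolding Hfun_def m_def[symmetric] e_def[symmetric] p_def[symmetric] q_def[symmetric]
    using p0 q0 k0 by (intro divide_left_mono mult_left_mono mult_pos_pos) auto
  also have "k = e*(1+e)/(m*q)" using m0 q0 by (simp add: k_def q_def field_simps)
  also have "1 / (p * q * (e*(1+e)/(m*q))^2) = m^2*q/(p*e^2*(1+e)^2)"
  proof -
    have "p * q * (e*(1+e)/(m*q))^2 = (p*e^2*(1+e)^2)/(m^2*q)" using m0 q0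
      by (simp add: power_divide power_mult_distrib power2_eq_square mult_ac)
    thus ?thesis by simp
  qed
  also have "\<dots> \<le> 2*m*q/e^2"
  proof -
    have "m^2*q \<le> (2*m*q/e^2) * (p*e^2*(1+e)^2)"
    proof -
      have "m*q*m \<le> m*q*(2*p)" using m0 p0 q0 by (intro mult_left_mono) auto
      also have "m*q*(2*p) \<le> m*q*(2*p)*(1+e)^2" using m0 p0 q0
      proof -
        have h1: "1 \<le> (1+e)^2" using m0 by (intro one_le_power) simp
        have h2: "0 \<le> m*q*(2*p)" using m0 p0 q0 by simp
        show ?thesis using mult_left_mono[OF h1 h2] by simp
      qed
      also have "\<dots> = (2*m*q/e^2) * (p*e^2*(1+e)^2)" using m0 by (simp add: field_simps)
      finally show ?thesis by (simp add: power2_eq_square mult_ac)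
    qed
    thus ?thesis using m0 p0 q0 by (simp add: pos_divide_le_eq)
  qed
  also have "2*m*q/e^2 \<le> 2 * (m * (1 - m)) / e^2 + 2 / e"
  proof -
    have "2*m*q/e^2 = 2 * (m * (1 - m)) / e^2 + 2*m/e" using m0
      by (simp add: q_def field_simps power2_eq_square)
    also have "2*m/e \<le> 2/e" using m0 by (simp add: divide_right_mono)
    finally show ?thesis by simp
  qed
  finally show ?thesis by (simp add: m_def e_def)
qed

end
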